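(* Let $S$ be an $L$-theory extending $I\Sigma_1$ such that for some $K_0\in\mathbb{N}$, $S$ proves that pairwise coprime $a,b,c$ with $a+b=c$ satisfy $c<K_0\,\mathrm{rad}(abc)^{1+1/3}$, and $S$ proves Catalan's conjecture for the definable exponential $x^y$. Let $\langle\mathcal{B},e\rangle\models S+\mathrm{Exp}'$, with $\mathcal{A}$ a substructure of $\mathcal{B}$ satisfying $\mathrm{Pr}$ and $e:B\times A\to B$. Let $x\in B$, $y\in A$ with $x,y>1$. (a) If $y$ is standard, then $\mathrm{rad}(e(x,y))^2\le e(x,y)$. (b) If $y$ is nonstandard, then $K\,\mathrm{rad}(e(x,y))^n<e(x,y)$ for all standard $K,n\in\mathbb{N}$.
   Context: $L=\langle0,1,+,\cdot,\le\rangle$; $\mathrm{rad}(a)$ is the product of the distinct primes dividing $a$. Catalan's conjecture for $x^y$: the only $x,y,a,b>1$ with $x^a-y^b=1$ are $x=3,a=2,y=2,b=3$. Presburger arithmetic $\mathrm{Pr}$: $0\ne z+1$; $x\ne0\to\exists z\,(x=z+1)$; $x+z=y+z\to x=y$; $x+0=x$; associativity and commutativity of $+$; $x\le y\leftrightarrow\exists z\,(x+z=y)$; for each standard $0<n$, $\exists y\,(ny\le x<n(y+1))$. $\mathrm{Exp}'$: (e0) there is an $L$-substructure $\mathcal{A}$ of $\mathcal{B}$ satisfying $\mathrm{Pr}$ with $e:B\times A\to B$; and for $x\in B$, $y,z\in A$: (e1) $(x=1\vee y=0)\leftrightarrow e(x,y)=1$; (e2) $x\ne0\to e(x,y)\neq0$;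 (e3) $e(x,1)=x$; (e4) $e(x,y+z)=e(x,y)e(x,z)$. *)

theory Defs
  imports Main
begin

text \<open>The universe of the structure B is the whole HOL type 'a.\<close>

record 'a Lstr =
  zr :: 'a
  on :: 'a
  ad :: "'a \<Rightarrow> 'a \<Rightarrow> 'a"
  mu :: "'a \<Rightarrow> 'a \<Rightarrow> 'a"
  lq :: "'a \<Rightarrow> 'a \<Rightarrow> bool"

datatype tm = Var nat | Zero | One | Plus tm tm | Times tm tm

text \<open>BEx t f / BAll t f are bounded quantifiers (exists/forall x <= t); the bound
  t is evaluated in the outer environment, so the bound variable never occurs in t.\<close>
datatype fm = Eq tm tm | Le tm tm | Neg fm | Conj fm fm | Disj fm fm
  | Ex fm | All fm | BEx tm fm | BAll tm fm

primrec evt :: "'a Lstr \<Rightarrow> (nat \<Rightarrow> 'a) \<Rightarrow> tm \<Rightarrow> 'a" where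
  "evt M v (Var i) = v i"
| "evt M v Zero = zr M"
| "evt M v One = on M"
| "evt M v (Plus s t) = ad M (evt M v s) (evt M v t)"
| "evt M v (Times s t) = mu M (evt M v s) (evt M v t)"

primrec sat :: "'a Lstr \<Rightarrow> (nat \<Rightarrow> 'a) \<Rightarrow> fm \<Rightarrow> bool" where
  "sat M v (Eq s t) = (evt M v s = evt M v t)"
| "sat M v (Le s t) = lq M (evt M v s) (evt M v t)"
| "sat M v (Neg f) = (\<not> sat M v f)"
| "sat M v (Conj f g) = (sat M v f \<and> sat M v g)"
| "sat M v (Disj f g) = (sat M v f \<or> sat M v g)"
| "sat M v (Ex f) = (\<exists>x. sat M (case_nat x v) f)"
| "sat M v (All f) = (\<forall>x. sat M (case_nat x v) f)"
| "sat M v (BEx t f) = (\<exists>x. lq M x (evt M v t) \<and> sat M (case_nat x v) f)"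
| "sat M v (BAll t f) = (\<forall>x. lq M x (evt M v t) \<longrightarrow> sat M (case_nat x v) f)"

primrec delta0 :: "fm \<Rightarrow> bool" where
  "delta0 (Eq s t) = True"
| "delta0 (Le s t) = True"
| "delta0 (Neg f) = delta0 f"
| "delta0 (Conj f g) = (delta0 f \<and> delta0 g)"
| "delta0 (Disj f g) = (delta0 f \<and> delta0 g)"
| "delta0 (Ex f) = False"
| "delta0 (All f) = False"
| "delta0 (BEx t f) = delta0 f"
| "delta0 (BAll t f) = delta0 f"

fun sigma1 :: "fm \<Rightarrow> bool" where
  "sigma1 (Ex f) = sigma1 f"
| "sigma1 f = delta0 f"

definition Q_ax :: "'a Lstr \<Rightarrow> bool" where
  "Q_ax M \<longleftrightarrow>
     (\<forall>x. ad M x (on M) \<noteq> zr M) \<and>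
     (\<forall>x y. ad M x (on M) = ad M y (on M) \<longrightarrow> x = y) \<and>
     (\<forall>x. x \<noteq> zr M \<longrightarrow> (\<exists>y. x = ad M y (on M))) \<and>
     (\<forall>x. ad M x (zr M) = x) \<and>
     (\<forall>x y. ad M x (ad M y (on M)) = ad M (ad M x y) (on M)) \<and>
     (\<forall>x. mu M x (zr M) = zr M) \<and>
     (\<forall>x y. mu M x (ad M y (on M)) = ad M (mu M x y) x) \<and>
     (\<forall>x y. lq M x y \<longleftrightarrow> (\<exists>z. ad M z x = y))"

definition ISigma1 :: "'a Lstr \<Rightarrow> bool" where
  "ISigma1 M \<longleftrightarrow> Q_ax M \<and>
     (\<forall>f. sigma1 f \<longrightarrow> (\<forall>v.
        (sat M (case_nat (zr M) v) f \<and>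
         (\<forall>x. sat M (case_nat x v) f \<longrightarrow> sat M (case_nat (ad M x (on M)) v) f))
        \<longrightarrow> (\<forall>x. sat M (case_nat x v) f)))"

primrec num :: "'a Lstr \<Rightarrow> nat \<Rightarrow> 'a" where
  "num M 0 = zr M"
| "num M (Suc n) = ad M (num M n) (on M)"

primrec pw :: "'a Lstr \<Rightarrow> 'a \<Rightarrow> nat \<Rightarrow> 'a" where
  "pw M r 0 = on M"
| "pw M r (Suc n) = mu M (pw M r n) r"

text \<open>n y as an abbreviation y + ... + y (n summands), as in Presburger arithmetic\<close>
primrec nsum :: "'a Lstr \<Rightarrow> nat \<Rightarrow> 'a \<Rightarrow> 'a" where
  "nsum M 0 y = zr M"
| "nsum M (Suc n) y = ad M (nsum M n y) y"

definition lt :: "'a Lstr \<Rightarrow> 'a \<Rightarrow> 'a \<Rightarrow> bool" where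
  "lt M x y \<longleftrightarrow> lq M x y \<and> x \<noteq> y"

definition dvdB :: "'a Lstr \<Rightarrow> 'a \<Rightarrow> 'a \<Rightarrow> bool" where
  "dvdB M d a \<longleftrightarrow> (\<exists>k. a = mu M d k)"

definition coprimeB :: "'a Lstr \<Rightarrow> 'a \<Rightarrow> 'a \<Rightarrow> bool" where
  "coprimeB M a b \<longleftrightarrow> (\<forall>d. dvdB M d a \<and> dvdB M d b \<longrightarrow> d = on M)"

definition sqfreeB :: "'a Lstr \<Rightarrow> 'a \<Rightarrow> bool" where
  "sqfreeB M r \<longleftrightarrow> (\<forall>d. dvdB M (mu M d d) r \<longrightarrow> d = on M)"

text \<open>rad(a) = r : r is the largest squarefree divisor of a (for a >= 1 this is the
  product of the distinct primes dividing a); a first-order definition.\<close>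
definition is_rad :: "'a Lstr \<Rightarrow> 'a \<Rightarrow> 'a \<Rightarrow> bool" where
  "is_rad M a r \<longleftrightarrow> dvdB M r a \<and> sqfreeB M r \<and>
     (\<forall>s. dvdB M s a \<and> sqfreeB M s \<longrightarrow> lq M s r)"

text \<open>Goedel's beta function: beta(c,d,i) = c mod (1 + (i+1) d)\<close>
definition betaB :: "'a Lstr \<Rightarrow> 'a \<Rightarrow> 'a \<Rightarrow> 'a \<Rightarrow> 'a \<Rightarrow> bool" where
  "betaB M c d i r \<longleftrightarrow>
     (let m = ad M (on M) (mu M (ad M i (on M)) d) in
       (\<exists>q. c = ad M (mu M q m) r) \<and> lt M r m)"

definition is_exp :: "'a Lstr \<Rightarrow> 'a \<Rightarrow> 'a \<Rightarrow> 'a \<Rightarrow> bool" where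
  "is_exp M x a z \<longleftrightarrow> (\<exists>c d.
     betaB M c d (zr M) (on M) \<and>
     (\<forall>i. lt M i a \<longrightarrow> (\<exists>u. betaB M c d i u \<and> betaB M c d (ad M i (on M)) (mu M u x))) \<and>
     betaB M c d a z)"

text \<open>abc with exponent 1+1/3: c < K0 rad(abc)^(4/3), i.e. c^3 < K0^3 rad(abc)^4\<close>
definition abcB :: "'a Lstr \<Rightarrow> nat \<Rightarrow> bool" where
  "abcB M K0 \<longleftrightarrow> (\<forall>a b c r.
     a \<noteq> zr M \<and> b \<noteq> zr M \<and> c \<noteq> zr M \<and>
     coprimeB M a b \<and> coprimeB M a c \<and> coprimeB M b c \<and> ad M a b = c \<and>
     is_rad M (mu M (mu M a b) c) r
     \<longrightarrow> lt M (pw M c 3) (mu M (pw M (num M K0) 3) (pw M r 4)))"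

definition catalanB :: "'a Lstr \<Rightarrow> bool" where
  "catalanB M \<longleftrightarrow> (\<forall>x y a b u w.
     lt M (on M) x \<and> lt M (on M) y \<and> lt M (on M) a \<and> lt M (on M) b \<and>
     is_exp M x a u \<and> is_exp M y b w \<and> u = ad M w (on M)
     \<longrightarrow> x = num M 3 \<and> a = num M 2 \<and> y = num M 2 \<and> b = num M 3)"

definition substr :: "'a Lstr \<Rightarrow> 'a set \<Rightarrow> bool" where
  "substr M A \<longleftrightarrow> zr M \<in> A \<and> on M \<in> A \<and>
     (\<forall>x\<in>A. \<forall>y\<in>A. ad M x y \<in> A \<and> mu M x y \<in> A)"

definition Pr_on :: "'a Lstr \<Rightarrow> 'a set \<Rightarrow> bool" where
  "Pr_on M A \<longleftrightarrow>
     (\<forall>z\<in>A. zr M \<noteq> ad M z (on M)) \<and>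
     (\<forall>x\<in>A. x \<noteq> zr M \<longrightarrow> (\<exists>z\<in>A. x = ad M z (on M))) \<and>
     (\<forall>x\<in>A. \<forall>y\<in>A. \<forall>z\<in>A. ad M x z = ad M y z \<longrightarrow> x = y) \<and>
     (\<forall>x\<in>A. ad M x (zr M) = x) \<and>
     (\<forall>x\<in>A. \<forall>y\<in>A. \<forall>z\<in>A. ad M (ad M x y) z = ad M x (ad M y z)) \<and>
     (\<forall>x\<in>A. \<forall>y\<in>A. ad M x y = ad M y x) \<and>
     (\<forall>x\<in>A. \<forall>y\<in>A. lq M x y \<longleftrightarrow> (\<exists>z\<in>A. ad M x z = y)) \<and>
     (\<forall>n::nat. 0 < n \<longrightarrow> (\<forall>x\<in>A. \<exists>y\<in>A.
        lq M (nsum M n y) x \<and> lt M x (nsum M n (ad M y (on M)))))"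

definition ExpP :: "'a Lstr \<Rightarrow> 'a set \<Rightarrow> ('a \<Rightarrow> 'a \<Rightarrow> 'a) \<Rightarrow> bool" where
  "ExpP M A e \<longleftrightarrow> substr M A \<and> Pr_on M A \<and>
     (\<forall>x. \<forall>y\<in>A. (x = on M \<or> y = zr M) \<longleftrightarrow> e x y = on M) \<and>
     (\<forall>x. \<forall>y\<in>A. x \<noteq> zr M \<longrightarrow> e x y \<noteq> zr M) \<and>
     (\<forall>x. e x (on M) = x) \<and>
     (\<forall>x. \<forall>y\<in>A. \<forall>z\<in>A. e x (ad M y z) = mu M (e x y) (e x z))"

definition standard :: "'a Lstr \<Rightarrow> 'a \<Rightarrow> bool" where
  "standard M y \<longleftrightarrow> (\<exists>n. y = num M n)"

end

theory Submission
  imports Defs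
begin

locale IS = fixes M :: "'a Lstr" assumes IS: "ISigma1 M"
begin

abbreviation Zr where "Zr \<equiv> zr M"
abbreviation On where "On \<equiv> on M"
abbreviation pl (infixl "\<oplus>" 65) where "x \<oplus> y \<equiv> ad M x y"
abbreviation tm (infixl "\<otimes>" 70) where "x \<otimes> y \<equiv> mu M x y"
abbreviation le (infix "\<preceq>" 50) where "x \<preceq> y \<equiv> lq M x y"

lemma Q: "Q_ax M" using IS unfolding ISigma1_def by blast

lemma a1: "x \<oplus> On \<noteq> Zr" using Q unfolding Q_ax_def by blast
lemma a2: "x \<oplus> On = y \<oplus> On \<Longrightarrow> x = y" using Q unfolding Q_ax_def by blast
lemma a3: "x \<noteq> Zr \<Longrightarrow> \<exists>y. x = y \<oplus> On" using Q unfolding Q_ax_def by blast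
lemma a4[simp]: "x \<oplus> Zr = x" using Q unfolding Q_ax_def by blast
lemma a5: "x \<oplus> (y \<oplus> On) = (x \<oplus> y) \<oplus> On" using Q unfolding Q_ax_def by blast
lemma a6[simp]: "x \<otimes> Zr = Zr" using Q unfolding Q_ax_def by blast
lemma a7: "x \<otimes> (y \<oplus> On) = (x \<otimes> y) \<oplus> x" using Q unfolding Q_ax_def by blast
lemma a8: "x \<preceq> y \<longleftrightarrow> (\<exists>z. z \<oplus> x = y)" using Q unfolding Q_ax_def by blast

lemma ind:
  assumes "sigma1 f" "\<And>x. sat M (case_nat x v) f = P x" "P Zr" "\<And>x. P x \<Longrightarrow> P (x \<oplus> On)"
  shows "P x"
proof -
  have "(sat M (case_nat Zr v) f \<and>
         (\<forall>x. sat M (case_nat x v) f \<longrightarrow> sat M (case_nat (x \<oplus> On) v) f))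
        \<longrightarrow> (\<forall>x. sat M (case_nat x v) f)"
    using IS assms(1) unfolding ISigma1_def by blast
  thus ?thesis using assms(2-4) by auto
qed

lemma l1[simp]: "Zr \<oplus> x = x"
  by (rule ind[where f="Eq (Plus Zero (Var 0)) (Var 0)" and P="\<lambda>x. Zr \<oplus> x = x" and v=undefined]) (auto simp: a5)

lemma l2: "(x \<oplus> y) \<oplus> z = x \<oplus> (y \<oplus> z)"
  by (rule ind[where f="Eq (Plus (Plus (Var 1) (Var 2)) (Var 0)) (Plus (Var 1) (Plus (Var 2) (Var 0)))"
      and P="\<lambda>z. (x \<oplus> y) \<oplus> z = x \<oplus> (y \<oplus> z)" and v="\<lambda>i. if i = 0 then x else y"]) (auto simp: a5)

lemma l3: "On \<oplus> x = x \<oplus> On"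
  by (rule ind[where f="Eq (Plus One (Var 0)) (Plus (Var 0) One)" and P="\<lambda>x. On \<oplus> x = x \<oplus> On" and v=undefined]) (auto simp: a5)

lemma l4: "x \<oplus> y = y \<oplus> x"
proof (rule ind[where f="Eq (Plus (Var 1) (Var 0)) (Plus (Var 0) (Var 1))" and P="\<lambda>y. x \<oplus> y = y \<oplus> x" and v="\<lambda>i. x"])
  fix y assume h: "x \<oplus> y = y \<oplus> x"
  have "y \<oplus> On \<oplus> x = y \<oplus> (On \<oplus> x)" by (rule l2)
  also have "\<dots> = y \<oplus> (x \<oplus> On)" by (simp add: l3)
  also have "\<dots> = (y \<oplus> x) \<oplus> On" by (rule a5)
  also have "\<dots> = x \<oplus> (y \<oplus> On)" by (simp add: a5 h)
  finally show "x \<oplus> (y \<oplus> On) = y \<oplus> On \<oplus> x" by simp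
qed simp_all

interpretation add: abel_semigroup "ad M"
  by unfold_locales (rule l2, rule l4)

lemmas addac = add.assoc add.commute add.left_commute

lemma l5: "x \<oplus> z = y \<oplus> z \<Longrightarrow> x = y"
proof -
  have "x \<oplus> z = y \<oplus> z \<longrightarrow> x = y"
  proof (rule ind[where f="Disj (Neg (Eq (Plus (Var 1) (Var 0)) (Plus (Var 2) (Var 0)))) (Eq (Var 1) (Var 2))"
      and v="\<lambda>i. if i = 0 then x else y" and P="\<lambda>z. x \<oplus> z = y \<oplus> z \<longrightarrow> x = y"])
    fix z assume h: "x \<oplus> z = y \<oplus> z \<longrightarrow> x = y"
    show "x \<oplus> (z \<oplus> On) = y \<oplus> (z \<oplus> On) \<longrightarrow> x = y"
      using h a2[of "x \<oplus> z" "y \<oplus> z"] unfolding a5 by blast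
  qed simp_all
  thus "x \<oplus> z = y \<oplus> z \<Longrightarrow> x = y" by blast
qed

lemma l6: "x \<otimes> (y \<oplus> z) = x \<otimes> y \<oplus> x \<otimes> z"
  by (rule ind[where f="Eq (Times (Var 1) (Plus (Var 2) (Var 0))) (Plus (Times (Var 1) (Var 2)) (Times (Var 1) (Var 0)))"
      and P="\<lambda>z. x \<otimes> (y \<oplus> z) = x \<otimes> y \<oplus> x \<otimes> z" and v="\<lambda>i. if i = 0 then x else y"]) (simp_all add: a5 a7, simp add: addac)

lemma l7[simp]: "Zr \<otimes> x = Zr"
  by (rule ind[where f="Eq (Times Zero (Var 0)) Zero" and P="\<lambda>x. Zr \<otimes> x = Zr" and v=undefined]) (auto simp: a7)

lemma l8: "(x \<oplus> On) \<otimes> y = x \<otimes> y \<oplus> y"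
  by (rule ind[where f="Eq (Times (Plus (Var 1) One) (Var 0)) (Plus (Times (Var 1) (Var 0)) (Var 0))"
      and P="\<lambda>y. (x \<oplus> On) \<otimes> y = x \<otimes> y \<oplus> y" and v="\<lambda>i. x"]) (simp_all add: a5 a7, simp add: addac)

lemma l9: "x \<otimes> y = y \<otimes> x"
  by (rule ind[where f="Eq (Times (Var 1) (Var 0)) (Times (Var 0) (Var 1))" and P="\<lambda>y. x \<otimes> y = y \<otimes> x" and v="\<lambda>i. x"])
     (auto simp: a7 l8)

lemma m1[simp]: "x \<otimes> On = x" using a7[of x Zr] by simp

lemma l10: "(x \<otimes> y) \<otimes> z = x \<otimes> (y \<otimes> z)"
  by (rule ind[where f="Eq (Times (Times (Var 1) (Var 2)) (Var 0)) (Times (Var 1) (Times (Var 2) (Var 0)))"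
      and P="\<lambda>z. (x \<otimes> y) \<otimes> z = x \<otimes> (y \<otimes> z)" and v="\<lambda>i. if i = 0 then x else y"]) (auto simp: a7 l6)

interpretation mul: abel_semigroup "mu M"
  by unfold_locales (metis l10, metis l9)

lemmas mulac = mul.assoc mul.commute mul.left_commute

lemma distr: "x \<otimes> (y \<oplus> z) = x \<otimes> y \<oplus> x \<otimes> z" "(y \<oplus> z) \<otimes> x = y \<otimes> x \<oplus> z \<otimes> x"
  using l6 l9 by metis+

lemma m1'[simp]: "On \<otimes> x = x" using m1 l9 by metis


lemma le_def': "x \<preceq> y \<longleftrightarrow> (\<exists>z. x \<oplus> z = y)" using a8 l4 by metis

lemma le_refl[simp]: "x \<preceq> x" unfolding le_def' by (rule exI[of _ Zr]) simp

lemma le_trans: "x \<preceq> y \<Longrightarrow> y \<preceq> z \<Longrightarrow> x \<preceq> z"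
  unfolding le_def' by (metis l2)

lemma add_left_cancel: "z \<oplus> x = z \<oplus> y \<Longrightarrow> x = y" using l5 l4 by metis

lemma add_zero_eq: "x \<oplus> z = x \<Longrightarrow> z = Zr"
  using add_left_cancel[of x z Zr] by simp

lemma sum_zero: "z \<oplus> w = Zr \<Longrightarrow> z = Zr \<and> w = Zr"
proof -
  assume h: "z \<oplus> w = Zr"
  have "w = Zr"
  proof (rule ccontr)
    assume "w \<noteq> Zr" then obtain w' where "w = w' \<oplus> On" using a3 by blast
    with h have "(z \<oplus> w') \<oplus> On = Zr" by (simp add: a5)
    thus False using a1 by blast
  qed
  with h show ?thesis by simp
qed

lemma le_antisym: "x \<preceq> y \<Longrightarrow> y \<preceq> x \<Longrightarrow> x = y"
  unfolding le_def' by (metis add_zero_eq l2 sum_zero a4)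

lemma zero_le[simp]: "Zr \<preceq> x" unfolding le_def' by auto

lemma le_zero: "x \<preceq> Zr \<Longrightarrow> x = Zr" using le_antisym zero_le by blast

lemma le_Suc_self: "x \<preceq> x \<oplus> On" unfolding le_def' by blast

lemma le_total: "x \<preceq> y \<or> y \<preceq> x"
proof (rule ind[where f="Disj (Le (Var 0) (Var 1)) (Le (Var 1) (Var 0))" and v="\<lambda>i. y"
      and P="\<lambda>x. x \<preceq> y \<or> y \<preceq> x"])
  fix x assume h: "x \<preceq> y \<or> y \<preceq> x"
  show "x \<oplus> On \<preceq> y \<or> y \<preceq> x \<oplus> On"
  proof (cases "y \<preceq> x")
    case True thus ?thesis using le_trans le_Suc_self by blast
  next
    case False
    with h obtain z where z: "x \<oplus> z = y" unfolding le_def' by blast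
    show ?thesis
    proof (cases "z = Zr")
      case True thus ?thesis using z False by simp
    next
      case False
      then obtain z' where "z = z' \<oplus> On" using a3 by blast
      with z have "(x \<oplus> On) \<oplus> z' = y" by (metis a5 l2 l3)
      thus ?thesis unfolding le_def' by blast
    qed
  qed
qed simp_all

lemma lt_def': "lt M x y \<longleftrightarrow> x \<oplus> On \<preceq> y"
proof
  assume "lt M x y"
  then obtain z where z: "x \<oplus> z = y" "x \<noteq> y" unfolding lt_def le_def' by blast
  then have "z \<noteq> Zr" by auto
  then obtain z' where "z = z' \<oplus> On" using a3 by blast
  with z have "(x \<oplus> On) \<oplus> z' = y" by (metis a5 l2 l3)
  thus "x \<oplus> On \<preceq> y" unfolding le_def' by blast
next
  assume "x \<oplus> On \<preceq> y"
  then obtain z where z: "(x \<oplus> On) \<oplus> z = y" unfolding le_def' by blast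
  hence "x \<preceq> y" unfolding le_def' by (metis l2)
  moreover have "x \<noteq> y"
  proof
    assume "x = y"
    with z have "x \<oplus> (On \<oplus> z) = x" by (simp add: l2)
    hence "On \<oplus> z = Zr" by (rule add_zero_eq)
    thus False using a1 l4 by metis
  qed
  ultimately show "lt M x y" unfolding lt_def by blast
qed

lemma not_le: "\<not> x \<preceq> y \<longleftrightarrow> lt M y x"
  unfolding lt_def using le_total le_antisym by blast

lemma le_Suc: "u \<preceq> t \<oplus> On \<Longrightarrow> u \<preceq> t \<or> u = t \<oplus> On"
  by (metis not_le lt_def' le_antisym)


lemma add_le_mono: "x \<preceq> y \<Longrightarrow> x \<oplus> z \<preceq> y \<oplus> z"
  unfolding le_def' by (metis addac)

lemma add_le_cancel: "x \<oplus> z \<preceq> y \<oplus> z \<Longrightarrow> x \<preceq> y"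
  unfolding le_def' by (metis addac l5)

lemma add_lt_cancel: "lt M (x \<oplus> z) (y \<oplus> z) \<Longrightarrow> lt M x y"
  unfolding lt_def' by (metis add_le_cancel addac)

lemma le_add: "x \<preceq> x \<oplus> y" unfolding le_def' by blast
lemma le_add2: "x \<preceq> y \<oplus> x" unfolding le_def' by (metis l4)

lemma mult_le_mono: "x \<preceq> y \<Longrightarrow> x \<otimes> z \<preceq> y \<otimes> z"
  unfolding le_def' by (metis distr(2))

lemma mult_le_mono2: "x \<preceq> y \<Longrightarrow> z \<otimes> x \<preceq> z \<otimes> y"
  using mult_le_mono l9 by metis

lemma mult_le_mono12: "x \<preceq> y \<Longrightarrow> u \<preceq> w \<Longrightarrow> x \<otimes> u \<preceq> y \<otimes> w"
  by (metis mult_le_mono mult_le_mono2 le_trans)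

lemma nz_ge1: "x \<noteq> Zr \<Longrightarrow> On \<preceq> x"
  using lt_def' lt_def zero_le l1 by metis

lemma le_mult: "z \<noteq> Zr \<Longrightarrow> x \<preceq> x \<otimes> z"
  using mult_le_mono2[OF nz_ge1, of z x] by simp

lemma mult_eq_zero: "x \<otimes> y = Zr \<Longrightarrow> x = Zr \<or> y = Zr"
  by (metis a3 a7 sum_zero)

lemma lt_le_trans: "lt M x y \<Longrightarrow> y \<preceq> z \<Longrightarrow> lt M x z"
  unfolding lt_def' using le_trans by blast
lemma le_lt_trans: "x \<preceq> y \<Longrightarrow> lt M y z \<Longrightarrow> lt M x z"
  unfolding lt_def' using le_trans add_le_mono by blast
lemma lt_imp_le: "lt M x y \<Longrightarrow> x \<preceq> y" unfolding lt_def by blast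
lemma lt_irrefl: "\<not> lt M x x" unfolding lt_def by blast

lemma mult_lt_mono: "z \<noteq> Zr \<Longrightarrow> lt M x y \<Longrightarrow> lt M (x \<otimes> z) (y \<otimes> z)"
proof -
  assume z: "z \<noteq> Zr" and "lt M x y"
  then obtain w where w: "(x \<oplus> On) \<oplus> w = y" unfolding lt_def' le_def' by blast
  have "y \<otimes> z = x \<otimes> z \<oplus> (z \<oplus> w \<otimes> z)" unfolding w[symmetric] by (simp add: distr(2) add.assoc)
  moreover have "z \<oplus> w \<otimes> z \<noteq> Zr" using z sum_zero by blast
  ultimately show ?thesis unfolding lt_def using add_zero_eq le_add by metis
qed

lemma mult_cancel: "z \<noteq> Zr \<Longrightarrow> x \<otimes> z = y \<otimes> z \<Longrightarrow> x = y"
proof (rule ccontr)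
  assume h: "z \<noteq> Zr" "x \<otimes> z = y \<otimes> z" "x \<noteq> y"
  hence "lt M x y \<or> lt M y x" unfolding lt_def using le_total by blast
  thus False using mult_lt_mono[OF h(1)] h(2) lt_irrefl by metis
qed

lemma mult_cancel_left: "z \<noteq> Zr \<Longrightarrow> z \<otimes> x = z \<otimes> y \<Longrightarrow> x = y"
  by (metis mult_cancel l9)

lemma mult_le_cancel: "z \<noteq> Zr \<Longrightarrow> x \<otimes> z \<preceq> y \<otimes> z \<Longrightarrow> x \<preceq> y"
proof (rule ccontr)
  assume h: "z \<noteq> Zr" "x \<otimes> z \<preceq> y \<otimes> z" "\<not> x \<preceq> y"
  hence "lt M (y \<otimes> z) (x \<otimes> z)" using mult_lt_mono not_le by blast
  thus False using h(2) not_le by blast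
qed

lemma dvd_le: "a \<noteq> Zr \<Longrightarrow> dvdB M d a \<Longrightarrow> d \<preceq> a"
  unfolding dvdB_def by (metis le_mult a6)

lemma dvd_refl: "dvdB M a a" unfolding dvdB_def by (metis m1)
lemma dvd_trans: "dvdB M a b \<Longrightarrow> dvdB M b c \<Longrightarrow> dvdB M a c"
  unfolding dvdB_def by (metis l10)
lemma dvd_mult: "dvdB M a b \<Longrightarrow> dvdB M a (b \<otimes> c)"
  unfolding dvdB_def by (metis l10)
lemma dvd_mult2: "dvdB M a b \<Longrightarrow> dvdB M a (c \<otimes> b)"
  using dvd_mult l9 by metis
lemma dvd_triv: "dvdB M a (a \<otimes> c)" unfolding dvdB_def by blast
lemma dvd_triv2: "dvdB M a (c \<otimes> a)" unfolding dvdB_def using l9 by blast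
lemma dvd_mult_mono: "dvdB M a b \<Longrightarrow> dvdB M c d \<Longrightarrow> dvdB M (a \<otimes> c) (b \<otimes> d)"
  unfolding dvdB_def by (metis mulac)

lemma dvd_sub: "dvdB M r u \<Longrightarrow> dvdB M r (u \<oplus> w) \<Longrightarrow> dvdB M r w"
proof -
  assume "dvdB M r u" "dvdB M r (u \<oplus> w)"
  then obtain k1 k2 where k: "u = r \<otimes> k1" "u \<oplus> w = r \<otimes> k2" unfolding dvdB_def by blast
  show ?thesis
  proof (cases "r = Zr")
    case True thus ?thesis using k unfolding dvdB_def by simp
  next
    case False
    have "k1 \<preceq> k2"
    proof (rule ccontr)
      assume "\<not> k1 \<preceq> k2"
      hence "lt M (k2 \<otimes> r) (k1 \<otimes> r)" using False not_le mult_lt_mono by blast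
      hence "lt M (u \<oplus> w) u" using k l9 by metis
      thus False using le_add not_le by blast
    qed
    then obtain k3 where "k1 \<oplus> k3 = k2" unfolding le_def' by blast
    hence "r \<otimes> k2 = r \<otimes> k1 \<oplus> r \<otimes> k3" using distr(1) by metis
    with k have "u \<oplus> w = u \<oplus> r \<otimes> k3" by simp
    hence "w = r \<otimes> k3" by (rule add_left_cancel)
    thus ?thesis unfolding dvdB_def by blast
  qed
qed


lemma add_le_mono2: "a \<preceq> b \<Longrightarrow> c \<preceq> d \<Longrightarrow> a \<oplus> c \<preceq> b \<oplus> d"
  by (metis add_le_mono l4 le_trans)

lemma On_ne_Zr: "On \<noteq> Zr" using a1[of Zr] by simp

lemma not_Suc_le: "\<not> x \<oplus> On \<preceq> x"
proof
  assume "x \<oplus> On \<preceq> x"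
  hence "On \<oplus> x \<preceq> Zr \<oplus> x" by (simp add: l4)
  hence "On \<preceq> Zr" by (rule add_le_cancel)
  thus False using le_zero On_ne_Zr by blast
qed

lemma lnp:
  assumes "sigma1 F" "\<And>t. sat M (case_nat t v) F = (\<forall>u. u \<preceq> t \<longrightarrow> \<not> P u)" "P b"
  shows "\<exists>m. P m \<and> (\<forall>u. P u \<longrightarrow> m \<preceq> u)"
proof (rule ccontr)
  assume nl: "\<not> ?thesis"
  have "\<forall>u. u \<preceq> t \<longrightarrow> \<not> P u" for t
  proof (rule ind[where f=F and v=v and P="\<lambda>t. \<forall>u. u \<preceq> t \<longrightarrow> \<not> P u"])
    show "sigma1 F" by (rule assms(1))
    show "\<And>x. sat M (case_nat x v) F = (\<forall>u. u \<preceq> x \<longrightarrow> \<not> P u)" by (rule assms(2))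
    show "\<forall>u. u \<preceq> Zr \<longrightarrow> \<not> P u" using le_zero nl zero_le by metis
    fix t assume IH: "\<forall>u. u \<preceq> t \<longrightarrow> \<not> P u"
    show "\<forall>u. u \<preceq> t \<oplus> On \<longrightarrow> \<not> P u"
    proof (intro allI impI)
      fix u assume u: "u \<preceq> t \<oplus> On"
      show "\<not> P u"
      proof
        assume Pu: "P u"
        hence "u = t \<oplus> On" using u le_Suc IH by blast
        moreover have "\<forall>w. P w \<longrightarrow> t \<oplus> On \<preceq> w"
          using IH not_le lt_def' by blast
        ultimately show False using nl Pu by blast
      qed
    qed
  qed
  thus False using assms(3) le_refl by blast
qed

lemma divmod: "d \<noteq> Zr \<Longrightarrow> \<exists>q s. a = q \<otimes> d \<oplus> s \<and> lt M s d"
proof -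
  assume d: "d \<noteq> Zr"
  have "\<exists>q s. a = q \<otimes> d \<oplus> s \<and> s \<preceq> d \<and> s \<noteq> d"
  proof (rule ind[where f="Ex (Ex (Conj (Eq (Var 2) (Plus (Times (Var 1) (Var 3)) (Var 0))) (Conj (Le (Var 0) (Var 3)) (Neg (Eq (Var 0) (Var 3))))))"
       and v="\<lambda>i. d" and P="\<lambda>a. \<exists>q s. a = q \<otimes> d \<oplus> s \<and> s \<preceq> d \<and> s \<noteq> d"])
    show "\<exists>q s. Zr = q \<otimes> d \<oplus> s \<and> s \<preceq> d \<and> s \<noteq> d"
      using d by (intro exI[of _ Zr]) simp
    fix a assume "\<exists>q s. a = q \<otimes> d \<oplus> s \<and> s \<preceq> d \<and> s \<noteq> d"
    then obtain q s where qs: "a = q \<otimes> d \<oplus> s" "lt M s d" unfolding lt_def by blast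
    hence s1: "s \<oplus> On \<preceq> d" using lt_def' by blast
    show "\<exists>q s. a \<oplus> On = q \<otimes> d \<oplus> s \<and> s \<preceq> d \<and> s \<noteq> d"
    proof (cases "s \<oplus> On = d")
      case True
      hence "a \<oplus> On = (q \<oplus> On) \<otimes> d \<oplus> Zr" using qs(1) by (simp add: l8 add.assoc)
      thus ?thesis using d zero_le by blast
    next
      case False
      hence "a \<oplus> On = q \<otimes> d \<oplus> (s \<oplus> On)" using qs(1) by (simp add: add.assoc)
      thus ?thesis using False s1 by blast
    qed
  qed simp_all
  thus ?thesis unfolding lt_def by blast
qed

definition PD where "PD a r b \<longleftrightarrow> b \<noteq> Zr \<and> (\<exists>k. k \<preceq> a \<otimes> b \<and> a \<otimes> b = r \<otimes> k)"

lemma PD_iff: "r \<noteq> Zr \<Longrightarrow> PD a r b \<longleftrightarrow> b \<noteq> Zr \<and> dvdB M r (a \<otimes> b)"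
  unfolding PD_def dvdB_def using le_mult l9 by metis

lemma Dlem:
  assumes r: "r \<noteq> Zr"
  shows "\<exists>m t. r = m \<otimes> t \<and> m \<noteq> Zr \<and> dvdB M t a \<and> (\<forall>b. dvdB M r (a \<otimes> b) \<longrightarrow> dvdB M m b)
            \<and> (\<forall>c. dvdB M c r \<and> dvdB M c a \<longrightarrow> dvdB M c t)"
proof -
  have "\<exists>m. PD a r m \<and> (\<forall>u. PD a r u \<longrightarrow> m \<preceq> u)"
  proof (rule lnp[where F="BAll (Var 0) (Neg (Conj (Neg (Eq (Var 0) Zero)) (BEx (Times (Var 2) (Var 0)) (Eq (Times (Var 3) (Var 1)) (Times (Var 4) (Var 0))))))"
       and v="\<lambda>i. if i = 0 then a else r" and b=r])
    show "PD a r r" using PD_iff[OF r] r dvd_triv2 by blast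
  qed (auto simp: PD_def)
  then obtain m where m: "PD a r m" "\<And>u. PD a r u \<Longrightarrow> m \<preceq> u" by blast
  have m0: "m \<noteq> Zr" and rm: "dvdB M r (a \<otimes> m)" using m(1) PD_iff[OF r] by auto
  have ii: "dvdB M m b" if rb: "dvdB M r (a \<otimes> b)" for b
  proof (cases "b = Zr")
    case True thus ?thesis unfolding dvdB_def by (metis a6)
  next
    case False
    obtain q s where qs: "b = q \<otimes> m \<oplus> s" "lt M s m" using divmod[OF m0] by blast
    have "a \<otimes> b = (a \<otimes> m) \<otimes> q \<oplus> a \<otimes> s" using qs(1) by (simp add: distr mulac)
    moreover have "dvdB M r ((a \<otimes> m) \<otimes> q)" using rm by (rule dvd_mult)
    ultimately have "dvdB M r (a \<otimes> s)" using rb dvd_sub by metis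
    hence "s = Zr" using m(2) PD_iff[OF r] qs(2) not_le by blast
    thus ?thesis using qs(1) unfolding dvdB_def using l9 by auto
  qed
  have "dvdB M m r" using ii dvd_triv2 by blast
  then obtain t where t: "r = m \<otimes> t" unfolding dvdB_def by blast
  have iv: "dvdB M t a"
  proof -
    obtain k where "a \<otimes> m = r \<otimes> k" using rm unfolding dvdB_def by blast
    hence "a \<otimes> m = (t \<otimes> k) \<otimes> m" using t by (simp add: mulac)
    hence "a = t \<otimes> k" using mult_cancel m0 by blast
    thus ?thesis unfolding dvdB_def by blast
  qed
  have v: "dvdB M c t" if c: "dvdB M c r" "dvdB M c a" for c
  proof -
    obtain r' a' where ra: "r = c \<otimes> r'" "a = c \<otimes> a'" using c unfolding dvdB_def by blast
    have "a \<otimes> r' = r \<otimes> a'" using ra by (simp add: mulac)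
    hence "dvdB M r (a \<otimes> r')" unfolding dvdB_def by blast
    hence "dvdB M m r'" by (rule ii)
    then obtain j where "r' = m \<otimes> j" unfolding dvdB_def by blast
    hence "t \<otimes> m = (c \<otimes> j) \<otimes> m" using ra(1) t by (simp add: mulac)
    hence "t = c \<otimes> j" using mult_cancel m0 by blast
    thus ?thesis unfolding dvdB_def by blast
  qed
  show ?thesis using t m0 iv ii v by blast
qed


lemma pw_Suc': "pw M a (Suc n) = a \<otimes> pw M a n" by (simp add: l9)
lemma pw_1[simp]: "pw M a 1 = a" by simp
lemma pw_2: "pw M a 2 = a \<otimes> a" by (simp add: numeral_2_eq_2)
lemma pw_add: "pw M a (i + j) = pw M a i \<otimes> pw M a j"
  by (induction j) (simp_all add: mulac)
lemma pw_mult: "pw M (a \<otimes> b) n = pw M a n \<otimes> pw M b n"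
  by (induction n) (simp_all add: mulac)
lemma pw_nz: "a \<noteq> Zr \<Longrightarrow> pw M a n \<noteq> Zr"
  by (induction n) (auto simp: On_ne_Zr dest: mult_eq_zero)
lemma pw_mono: "a \<preceq> b \<Longrightarrow> pw M a n \<preceq> pw M b n"
  by (induction n) (simp_all add: mult_le_mono12)
lemma pw_le: "On \<preceq> a \<Longrightarrow> i \<le> j \<Longrightarrow> pw M a i \<preceq> pw M a j"
proof -
  assume a: "On \<preceq> a" and "i \<le> j"
  then obtain k where j: "j = i + k" using le_Suc_ex by blast
  have "On \<preceq> pw M a k" by (induction k) (simp_all, metis a mult_le_mono12 m1)
  hence "pw M a i \<otimes> On \<preceq> pw M a i \<otimes> pw M a k" by (rule mult_le_mono2)
  thus ?thesis using j pw_add by simp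
qed

lemma sqfree_nz: "sqfreeB M r \<Longrightarrow> r \<noteq> Zr"
  unfolding sqfreeB_def dvdB_def using On_ne_Zr by (metis l7)

lemma sqfree_dvd: "sqfreeB M r \<Longrightarrow> dvdB M m r \<Longrightarrow> sqfreeB M m"
  unfolding sqfreeB_def using dvd_trans by blast

lemma sq_dvd_pow: "sqfreeB M r \<Longrightarrow> dvdB M r (pw M a (Suc k)) \<Longrightarrow> dvdB M r a"
proof (induction k arbitrary: r)
  case 0 thus ?case by simp
next
  case (Suc k)
  have r0: "r \<noteq> Zr" using Suc.prems(1) sqfree_nz by blast
  obtain m t where mt: "r = m \<otimes> t" "m \<noteq> Zr" "dvdB M t a"
     "\<And>b. dvdB M r (a \<otimes> b) \<Longrightarrow> dvdB M m b" "\<And>c. dvdB M c r \<and> dvdB M c a \<Longrightarrow> dvdB M c t"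
    using Dlem[OF r0, of a] by blast
  have "dvdB M r (a \<otimes> pw M a (Suc k))" using Suc.prems(2) pw_Suc' by metis
  hence "dvdB M m (pw M a (Suc k))" by (rule mt(4))
  moreover have "dvdB M m r" using mt(1) dvd_triv by blast
  hence "sqfreeB M m" using Suc.prems(1) sqfree_dvd by blast
  ultimately have "dvdB M m a" using Suc.IH by blast
  hence "dvdB M m t" using mt(5) \<open>dvdB M m r\<close> by blast
  hence "dvdB M (m \<otimes> m) r" using mt(1) dvd_mult_mono dvd_refl by metis
  hence "m = On" using Suc.prems(1) unfolding sqfreeB_def by blast
  thus ?case using mt(1,3) by simp
qed

definition SR where "SR z s \<longleftrightarrow> (\<exists>k. k \<preceq> z \<and> z = s \<otimes> k) \<and>
   (\<forall>d. d \<preceq> s \<longrightarrow> (\<forall>k. k \<preceq> s \<longrightarrow> \<not> (d \<otimes> d) \<otimes> k = s \<or> d = On))"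

lemma SR_iff: "z \<noteq> Zr \<Longrightarrow> SR z s \<longleftrightarrow> dvdB M s z \<and> sqfreeB M s"
proof -
  assume z: "z \<noteq> Zr"
  have 1: "(\<exists>k. k \<preceq> z \<and> z = s \<otimes> k) \<longleftrightarrow> dvdB M s z"
    unfolding dvdB_def using z le_mult l9 by (metis a6)
  have 2: "(\<forall>d. d \<preceq> s \<longrightarrow> (\<forall>k. k \<preceq> s \<longrightarrow> \<not> (d \<otimes> d) \<otimes> k = s \<or> d = On)) \<longleftrightarrow> sqfreeB M s"
    if s: "s \<noteq> Zr"
  proof
    assume h: "\<forall>d. d \<preceq> s \<longrightarrow> (\<forall>k. k \<preceq> s \<longrightarrow> \<not> (d \<otimes> d) \<otimes> k = s \<or> d = On)"
    show "sqfreeB M s" unfolding sqfreeB_def dvdB_def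
    proof (intro allI impI)
      fix d assume "\<exists>k. s = d \<otimes> d \<otimes> k"
      then obtain k where k: "s = d \<otimes> d \<otimes> k" by blast
      have dk3: "d \<otimes> k \<noteq> Zr" using s k by (metis l10 a6)
      have dk4: "d \<otimes> d \<noteq> Zr" using s k by (metis l7)
      note dk = dk3 dk3 dk3 dk4
      have "d \<preceq> s" using le_mult[OF dk(3), of d] k by (simp add: mulac)
      moreover have "k \<preceq> s" using le_mult[OF dk(4), of k] k by (simp add: mulac)
      ultimately show "d = On" using h k by blast
    qed
  next
    assume "sqfreeB M s"
    thus "\<forall>d. d \<preceq> s \<longrightarrow> (\<forall>k. k \<preceq> s \<longrightarrow> \<not> (d \<otimes> d) \<otimes> k = s \<or> d = On)"
      unfolding sqfreeB_def dvdB_def by metis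
  qed
  show ?thesis
  proof (cases "s = Zr")
    case True
    hence "\<not> dvdB M s z" using z unfolding dvdB_def by simp
    moreover have "\<not> SR z s" using True 1 calculation unfolding SR_def by blast
    ultimately show ?thesis by blast
  next
    case False thus ?thesis using 1 2 unfolding SR_def by blast
  qed
qed

definition PR where "PR z w \<longleftrightarrow> (\<exists>s. s \<preceq> z \<and> s \<oplus> w = z \<and> SR z s)"

lemma sqfree_On: "sqfreeB M On"
  unfolding sqfreeB_def dvdB_def
proof (intro allI impI)
  fix d assume "\<exists>k. On = d \<otimes> d \<otimes> k"
  then obtain k where k: "On = d \<otimes> (d \<otimes> k)" by (auto simp: mulac)
  hence "d \<otimes> k \<noteq> Zr" using On_ne_Zr by auto
  hence "d \<preceq> On" using le_mult k by metis
  moreover have "d \<noteq> Zr" using k On_ne_Zr by auto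
  ultimately show "d = On" using nz_ge1 le_antisym by blast
qed

lemma rad_ex: "z \<noteq> Zr \<Longrightarrow> \<exists>r. is_rad M z r"
proof -
  assume z: "z \<noteq> Zr"
  obtain w where w: "On \<oplus> w = z" using nz_ge1[OF z] unfolding le_def' by blast
  have "\<exists>m. PR z m \<and> (\<forall>u. PR z u \<longrightarrow> m \<preceq> u)"
  proof (rule lnp[where F="BAll (Var 0) (Neg (BEx (Var 2) (Conj (Eq (Plus (Var 0) (Var 1)) (Var 3)) (Conj (BEx (Var 3) (Eq (Var 4) (Times (Var 1) (Var 0)))) (BAll (Var 0) (BAll (Var 1) (Disj (Neg (Eq (Times (Times (Var 1) (Var 1)) (Var 0)) (Var 2))) (Eq (Var 1) One))))))))"
       and v="\<lambda>i. z" and b=w])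
    show "PR z w" unfolding PR_def using w nz_ge1[OF z] SR_iff[OF z] sqfree_On dvd_triv2[of On z]
      by (metis m1)
  qed (auto simp: PR_def SR_def)
  then obtain m where m: "PR z m" "\<And>u. PR z u \<Longrightarrow> m \<preceq> u" by blast
  then obtain s0 where s0: "s0 \<oplus> m = z" "dvdB M s0 z" "sqfreeB M s0"
    unfolding PR_def using SR_iff[OF z] by blast
  have "s \<preceq> s0" if s: "dvdB M s z" "sqfreeB M s" for s
  proof (rule ccontr)
    assume "\<not> s \<preceq> s0"
    hence "s0 \<oplus> On \<preceq> s" using not_le lt_def' by blast
    obtain u where u: "s \<oplus> u = z" using dvd_le[OF z s(1)] unfolding le_def' by blast
    have "PR z u" unfolding PR_def using u s SR_iff[OF z] dvd_le[OF z s(1)] by blast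
    hence "m \<preceq> u" by (rule m(2))
    hence "(s0 \<oplus> On) \<oplus> m \<preceq> s \<oplus> u" using \<open>s0 \<oplus> On \<preceq> s\<close> add_le_mono2 by blast
    moreover have "(s0 \<oplus> On) \<oplus> m = (s0 \<oplus> m) \<oplus> On" by (metis l2 l4)
    ultimately have "(s0 \<oplus> m) \<oplus> On \<preceq> s0 \<oplus> m" using u s0(1) by simp
    thus False using not_Suc_le by blast
  qed
  thus ?thesis unfolding is_rad_def using s0 by blast
qed


lemma num_add: "num M (a + b) = num M a \<oplus> num M b"
  by (induction b) (simp_all add: add.assoc)
lemma num_1: "num M 1 = On" by simp
lemma lt_num: "lt M u (num M k) \<Longrightarrow> \<exists>i<k. u = num M i"
proof (induction k arbitrary: u)
  case 0 thus ?case by (auto simp: lt_def dest: le_zero)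
next
  case (Suc k)
  hence "u \<preceq> num M k" using lt_def' add_le_cancel by auto
  thus ?case using Suc.IH lt_def by (metis less_Suc_eq)
qed
lemma nsum_num: "nsum M k (num M p) = num M (k * p)"
  by (induction k) (simp_all add: num_add add.commute)
lemma nsum_Suc: "nsum M k (q \<oplus> On) = nsum M k q \<oplus> num M k"
  by (induction k) (simp_all add: addac)

lemma lt_num_pw: "lt M On x \<Longrightarrow> lt M (num M K) (pw M x K)"
proof (induction K)
  case 0 show ?case using On_ne_Zr by (simp add: lt_def)
next
  case (Suc K)
  have x2: "On \<oplus> On \<preceq> x" using Suc.prems lt_def' by blast
  have p1: "On \<preceq> pw M x K" using Suc.IH Suc.prems lt_def' l1 zero_le le_trans add_le_mono by metis
  have "pw M x K \<otimes> (On \<oplus> On) \<preceq> pw M x (Suc K)" using x2 mult_le_mono2 by simp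
  moreover have "pw M x K \<otimes> (On \<oplus> On) = pw M x K \<oplus> pw M x K" by (simp add: distr)
  moreover have "num M K \<oplus> On \<oplus> On \<preceq> pw M x K \<oplus> pw M x K"
    using add_le_mono2 Suc.IH Suc.prems lt_def' p1 by blast
  ultimately show ?case using lt_def' le_trans by auto
qed

context
  fixes A e
  assumes E: "ExpP M A e"
begin

lemma sub: "substr M A" using E unfolding ExpP_def by blast
lemma PrA: "Pr_on M A" using E unfolding ExpP_def by blast
lemma Zr_A: "Zr \<in> A" and On_A: "On \<in> A" and add_A: "a \<in> A \<Longrightarrow> b \<in> A \<Longrightarrow> a \<oplus> b \<in> A"
  using sub unfolding substr_def by blast+
lemma e1: "y \<in> A \<Longrightarrow> (x = On \<or> y = Zr) \<longleftrightarrow> e x y = On" using E unfolding ExpP_def by blast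
lemma e2: "y \<in> A \<Longrightarrow> x \<noteq> Zr \<Longrightarrow> e x y \<noteq> Zr" using E unfolding ExpP_def by blast
lemma e3: "e x On = x" using E unfolding ExpP_def by blast
lemma e4: "y \<in> A \<Longrightarrow> z \<in> A \<Longrightarrow> e x (y \<oplus> z) = e x y \<otimes> e x z" using E unfolding ExpP_def by blast
lemma Pr_le: "a \<in> A \<Longrightarrow> b \<in> A \<Longrightarrow> a \<preceq> b \<Longrightarrow> \<exists>z\<in>A. a \<oplus> z = b"
  using PrA unfolding Pr_on_def by blast
lemma Pr_div: "0 < n \<Longrightarrow> y \<in> A \<Longrightarrow> \<exists>q\<in>A. nsum M n q \<preceq> y \<and> lt M y (nsum M n (q \<oplus> On))"
  using PrA unfolding Pr_on_def by blast

lemma e0[simp]: "e x Zr = On" using e1[OF Zr_A] by blast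
lemma num_A: "num M n \<in> A" by (induction n) (simp_all add: Zr_A On_A add_A)
lemma nsum_A: "q \<in> A \<Longrightarrow> nsum M n q \<in> A" by (induction n) (simp_all add: Zr_A add_A)
lemma e_num: "e x (num M n) = pw M x n"
  by (induction n) (simp_all add: e1 Zr_A e4 num_A On_A e3)
lemma e_nsum: "q \<in> A \<Longrightarrow> e x (nsum M n q) = pw M (e x q) n"
  by (induction n) (simp_all add: e1 Zr_A e4 nsum_A)

lemma partA:
  assumes y: "y = num M n" and x: "lt M On x" and y1: "lt M On y"
  shows "\<exists>r. is_rad M (e x y) r \<and> r \<otimes> r \<preceq> e x y"
proof -
  have x0: "x \<noteq> Zr" using x by (auto simp: lt_def dest: le_zero)
  have "n \<noteq> 0"
  proof
    assume "n = 0" hence "On \<preceq> Zr" using y y1 by (simp add: lt_def)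
    thus False using le_zero On_ne_Zr by blast
  qed
  moreover have "n \<noteq> 1" using y y1 lt_irrefl by auto
  ultimately obtain k where n: "n = Suc k" "2 \<le> n" by (cases n) auto
  have ey: "e x y = pw M x n" using y e_num by simp
  hence "e x y \<noteq> Zr" using pw_nz x0 by simp
  then obtain r where r: "is_rad M (e x y) r" using rad_ex by blast
  hence "dvdB M r (pw M x (Suc k))" "sqfreeB M r" using ey n(1) unfolding is_rad_def by simp_all
  hence "dvdB M r x" using sq_dvd_pow by blast
  hence "r \<preceq> x" using dvd_le x0 by blast
  hence "r \<otimes> r \<preceq> pw M x 2" using pw_2 mult_le_mono12 by simp
  moreover have "pw M x 2 \<preceq> pw M x n" using pw_le n(2) nz_ge1 x0 by blast
  ultimately have "r \<otimes> r \<preceq> e x y" using ey le_trans[of "r \<otimes> r" "pw M x 2" "pw M x n"] by simp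
  thus ?thesis using r by blast
qed


lemma partB:
  assumes yA: "y \<in> A" and x: "lt M On x" and ns: "\<not> standard M y"
  shows "\<exists>r. is_rad M (e x y) r \<and> lt M (num M K \<otimes> pw M r n) (e x y)"
proof -
  have x0: "x \<noteq> Zr" using x by (auto simp: lt_def dest: le_zero)
  define kk where "kk = Suc (Suc (2 * n))"
  obtain q where q: "q \<in> A" "nsum M kk q \<preceq> y" "lt M y (nsum M kk (q \<oplus> On))"
    using Pr_div[of kk y] yA unfolding kk_def by auto
  obtain j where j: "j \<in> A" "nsum M kk q \<oplus> j = y" using Pr_le[OF nsum_A[OF q(1)] yA q(2)] by blast
  have "lt M (nsum M kk q \<oplus> j) (nsum M kk q \<oplus> num M kk)" using q(3) j(2) nsum_Suc by simp
  hence "lt M j (num M kk)" using add_lt_cancel l4 by metis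
  then obtain i where i: "i < kk" "j = num M i" using lt_num by blast
  have qns: "\<not> standard M q"
  proof
    assume "standard M q"
    then obtain p where "q = num M p" unfolding standard_def by blast
    hence "y = num M (kk * p + i)" using j(2) i(2) nsum_num num_add by simp
    thus False using ns unfolding standard_def by blast
  qed
  define N where "N = n + K"
  have "num M N \<preceq> q"
  proof (rule ccontr)
    assume "\<not> num M N \<preceq> q"
    hence "lt M q (num M N)" using not_le by blast
    thus False using lt_num qns unfolding standard_def by blast
  qed
  then obtain z where z: "z \<in> A" "num M N \<oplus> z = q" using Pr_le[OF num_A q(1)] by blast
  define X where "X = e x q"
  have X: "X = pw M x N \<otimes> e x z" unfolding X_def using z e4[OF num_A z(1)] e_num by metis
  have ez: "On \<preceq> e x z" using e2[OF z(1) x0] nz_ge1 by blast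
  have XN: "pw M x N \<preceq> X" using mult_le_mono2[OF ez, of "pw M x N"] X by simp
  have "lt M (num M K \<otimes> pw M x n) (pw M x K \<otimes> pw M x n)"
    using mult_lt_mono[OF pw_nz[OF x0] lt_num_pw[OF x]] by blast
  moreover have "pw M x K \<otimes> pw M x n = pw M x N" unfolding N_def pw_add by (rule l9)
  ultimately have star: "lt M (num M K \<otimes> pw M x n) X" using XN lt_le_trans by metis
  have X0: "X \<noteq> Zr" unfolding X_def using e2 q(1) x0 by blast
  have Ey: "e x y = pw M X kk \<otimes> pw M x i"
    using j i(2) e4[OF nsum_A[OF q(1)] j(1)] e_nsum[OF q(1)] e_num X_def by metis
  have E0: "e x y \<noteq> Zr" using e2 yA x0 by blast
  obtain R where R: "is_rad M (e x y) R" using rad_ex E0 by blast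
  have kki: "kk = i + (kk - i)" using i(1) by simp
  have "pw M (X \<otimes> x) kk = (pw M X kk \<otimes> pw M x i) \<otimes> pw M x (kk - i)"
    unfolding pw_mult by (subst kki, subst pw_add) (simp add: mulac)
  hence "dvdB M (e x y) (pw M (X \<otimes> x) kk)" using Ey dvd_triv by simp
  hence "dvdB M R (pw M (X \<otimes> x) (Suc (Suc (2 * n))))" using R dvd_trans unfolding is_rad_def kk_def by blast
  hence "dvdB M R (X \<otimes> x)" using sq_dvd_pow R unfolding is_rad_def by blast
  moreover have "X \<otimes> x \<noteq> Zr" using X0 x0 mult_eq_zero by blast
  ultimately have Rle: "R \<preceq> X \<otimes> x" using dvd_le by blast
  have "pw M R n \<preceq> pw M X n \<otimes> pw M x n" using pw_mono[OF Rle] pw_mult by metis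
  hence "num M K \<otimes> pw M R n \<preceq> num M K \<otimes> (pw M X n \<otimes> pw M x n)" by (rule mult_le_mono2)
  hence 1: "num M K \<otimes> pw M R n \<preceq> (num M K \<otimes> pw M x n) \<otimes> pw M X n" by (simp add: mulac)
  have 2: "lt M ((num M K \<otimes> pw M x n) \<otimes> pw M X n) (X \<otimes> pw M X n)"
    using mult_lt_mono[OF pw_nz[OF X0] star] .
  have "pw M X (Suc n) \<preceq> pw M X kk" by (rule pw_le[OF nz_ge1[OF X0]]) (simp add: kk_def)
  hence 3: "X \<otimes> pw M X n \<preceq> pw M X kk" using pw_Suc' by metis
  have 4: "pw M X kk \<preceq> e x y" using Ey le_mult pw_nz x0 by metis
  have "lt M (num M K \<otimes> pw M R n) (X \<otimes> pw M X n)" using le_lt_trans[OF 1 2] .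
  hence "lt M (num M K \<otimes> pw M R n) (e x y)" using lt_le_trans[OF _ le_trans[OF 3 4]] by blast
  thus ?thesis using R by blast
qed

end

end

theorem lemma5p3:
  fixes B :: "'a Lstr" and A :: "'a set" and e :: "'a \<Rightarrow> 'a \<Rightarrow> 'a"
    and K0 :: nat and x y :: 'a
  assumes "ISigma1 B" and "abcB B K0" and "catalanB B"
    and "ExpP B A e"
    and "y \<in> A" and "lt B (on B) x" and "lt B (on B) y"
  shows "(standard B y \<longrightarrow>
            (\<exists>r. is_rad B (e x y) r \<and> lq B (mu B r r) (e x y)))
       \<and> (\<not> standard B y \<longrightarrow>
            (\<forall>K n::nat. \<exists>r. is_rad B (e x y) r \<and>
                lt B (mu B (num B K) (pw B r n)) (e x y)))"
proof -
  interpret IS B by unfold_locales (rule assms(1))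
  show ?thesis
  proof (intro conjI impI allI)
    assume "standard B y"
    then obtain n where "y = num B n" unfolding standard_def by blast
    thus "\<exists>r. is_rad B (e x y) r \<and> lq B (mu B r r) (e x y)"
      using partA[OF assms(4) _ assms(6) assms(7)] by blast
  next
    fix K n :: nat
    assume "\<not> standard B y"
    thus "\<exists>r. is_rad B (e x y) r \<and> lt B (mu B (num B K) (pw B r n)) (e x y)"
      using partB[OF assms(4) assms(5) assms(6)] by blast
  qed
qed

end
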